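(* Let $G$ be a group and assume that some finite index subgroup of $G$ embeds in $\mathrm{IET}$. Then $G$ embeds in $\mathrm{IET}$.
   Context: $\mathrm{IET}$ denotes the group of interval exchange transformations of $[0,1)$: bijections of $[0,1)$ that are orientation-preserving piecewise isometries (piecewise translations), left-continuous, with finitely many discontinuity points. *)

theory Defs
  imports Complex_Main "HOL-Algebra.Algebra"
begin

text \<open>An interval exchange transformation of [0,1), represented as a function
real => real which is the identity outside [0,1) (so that composition is
the group law). It is a bijection of [0,1), left-continuous at every point
of (0,1), and off a finite set D it is locally a translation
(f y - y is locally constant), i.e. a piecewise translation with finitely
many discontinuity points.\<close>

definition is_iet :: "(real \<Rightarrow> real) \<Rightarrow> bool" where
  "is_iet f \<longleftrightarrow>
     bij_betw f {0..<1} {0..<1}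
   \<and> (\<forall>x. x \<notin> {0..<1} \<longrightarrow> f x = x)
   \<and> (\<forall>x\<in>{0<..<1}. (f \<longlongrightarrow> f x) (at_left x))
   \<and> (\<exists>D. finite D \<and>
        (\<forall>x\<in>{0..<1} - D. \<exists>e>0. \<forall>y\<in>{0..<1}. \<bar>y - x\<bar> < e \<longrightarrow> f y - y = f x - x))"

definition IET :: "(real \<Rightarrow> real) monoid" where
  "IET = \<lparr>carrier = {f. is_iet f}, monoid.mult = (\<circ>), one = id\<rparr>"

definition embeds_in_IET :: "('a, 'b) monoid_scheme \<Rightarrow> bool" where
  "embeds_in_IET G \<longleftrightarrow> (\<exists>h. h \<in> hom G IET \<and> inj_on h (carrier G))"

end

theory Submission
  imports Defs
begin


lemma iet_out: "is_iet f \<Longrightarrow> x \<notin> {0..<1} \<Longrightarrow> f x = x"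
  unfolding is_iet_def by blast

lemma iet_range: "is_iet f \<Longrightarrow> x \<in> {0..<1} \<Longrightarrow> f x \<in> {0..<1}"
  unfolding is_iet_def bij_betw_def by blast

lemma iet_injon: "is_iet f \<Longrightarrow> inj_on f {0..<1}"
  unfolding is_iet_def bij_betw_def by blast

lemma iet_surj: "is_iet f \<Longrightarrow> z \<in> {0..<1} \<Longrightarrow> \<exists>y\<in>{0..<1}. f y = z"
  unfolding is_iet_def bij_betw_def by (metis imageE)

lemma iet_leftc: "is_iet f \<Longrightarrow> x \<in> {0<..<1} \<Longrightarrow> (f \<longlongrightarrow> f x) (at_left x)"
  unfolding is_iet_def by blast

lemma iet_D: "is_iet f \<Longrightarrow> \<exists>D. finite D \<and>
        (\<forall>x\<in>{0..<1} - D. \<exists>e>0. \<forall>y\<in>{0..<1}. \<bar>y - x\<bar> < e \<longrightarrow> f y - y = f x - x)"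
  unfolding is_iet_def by blast

lemma loc_const:
  fixes g :: "real \<Rightarrow> real"
  assumes "\<forall>x\<in>{p<..<q}. \<exists>e>0. \<forall>y\<in>{p<..<q}. \<bar>y - x\<bar> < e \<longrightarrow> g y = g x"
    and "x \<in> {p<..<q}" "y \<in> {p<..<q}"
  shows "g x = g y"
proof (rule connected_local_const[of "{p<..<q}" x y g])
  show "\<forall>a\<in>{p<..<q}. \<forall>\<^sub>F b in at a within {p<..<q}. g a = g b"
  proof
    fix a assume a: "a \<in> {p<..<q}"
    then obtain e where e: "e > 0" "\<forall>y\<in>{p<..<q}. \<bar>y - a\<bar> < e \<longrightarrow> g y = g a" using assms(1) by blast
    show "\<forall>\<^sub>F b in at a within {p<..<q}. g a = g b"
      unfolding eventually_at
      apply (rule exI[of _ e]) using e by (auto simp: dist_real_def)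
  qed
qed (use assms in auto)

lemma gap:
  assumes f: "is_iet f" and D: "\<forall>x\<in>{0..<1} - D. \<exists>e>0. \<forall>y\<in>{0..<1}. \<bar>y - x\<bar> < e \<longrightarrow> f y - y = f x - x"
    and pq: "0 \<le> p" "p < q" "q < 1" and nd: "\<forall>d\<in>D. d \<notin> {p<..<q}"
    and t: "t \<in> {p<..q}"
  shows "f t - t = f q - q"
proof -
  define g where "g t = f t - t" for t
  define c where "c = g ((p+q)/2)"
  have cst: "g x = c" if "x \<in> {p<..<q}" for x
    unfolding c_def
  proof (rule loc_const[of p q g])
    show "\<forall>x\<in>{p<..<q}. \<exists>e>0. \<forall>y\<in>{p<..<q}. \<bar>y - x\<bar> < e \<longrightarrow> g y = g x"
    proof
      fix x assume x: "x \<in> {p<..<q}"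
      then have "x \<in> {0..<1} - D" using pq nd by auto
      then obtain e where "e>0" "\<forall>y\<in>{0..<1}. \<bar>y - x\<bar> < e \<longrightarrow> f y - y = f x - x" using D by blast
      then show "\<exists>e>0. \<forall>y\<in>{p<..<q}. \<bar>y - x\<bar> < e \<longrightarrow> g y = g x"
        using pq unfolding g_def by (intro exI[of _ e]) auto
    qed
  qed (use that pq in auto)
  have ev: "eventually (\<lambda>t. t + c = f t) (at_left q)"
    using eventually_at_left_real[OF pq(2)] by eventually_elim (use cst g_def in force)
  have l1: "((\<lambda>t. t + c) \<longlongrightarrow> q + c) (at_left q)"
    by (intro tendsto_intros)
  have l2: "(f \<longlongrightarrow> q + c) (at_left q)"
    using Lim_transform_eventually[OF l1 ev] .
  have l3: "(f \<longlongrightarrow> f q) (at_left q)" using iet_leftc[OF f] pq by auto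
  have "f q = q + c" using tendsto_unique[OF _ l3 l2] by simp
  then show ?thesis using t cst[of t] g_def by (cases "t = q") auto
qed


lemma left_piece:
  assumes f: "is_iet f" and y: "0 < y" "y < 1"
  shows "\<exists>p. 0 \<le> p \<and> p < y \<and> (\<forall>t\<in>{p<..y}. f t - t = f y - y)"
proof -
  obtain D where D: "finite D" "\<forall>x\<in>{0..<1} - D. \<exists>e>0. \<forall>y\<in>{0..<1}. \<bar>y - x\<bar> < e \<longrightarrow> f y - y = f x - x"
    using iet_D[OF f] by blast
  define S where "S = insert 0 {d\<in>D. d < y}"
  define p where "p = Max S"
  have fS: "finite S" using D(1) unfolding S_def by auto
  have p0: "0 \<le> p" unfolding p_def using fS by (simp add: S_def)
  have py: "p < y" unfolding p_def using fS y by (subst Max_less_iff) (auto simp: S_def)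
  have nd: "\<forall>d\<in>D. d \<notin> {p<..<y}"
  proof (intro ballI notI)
    fix d assume "d \<in> D" "d \<in> {p<..<y}"
    then have "d \<in> S" by (auto simp: S_def)
    then have "d \<le> p" unfolding p_def using fS by simp
    then show False using \<open>d \<in> {p<..<y}\<close> by auto
  qed
  show ?thesis using gap[OF f D(2) p0 py y(2) nd] p0 py by blast
qed

lemma iet_zero: assumes f: "is_iet f" shows "f 0 = 0"
proof -
  obtain y where y: "y \<in> {0..<1}" "f y = 0" using iet_surj[OF f, of 0] by auto
  show ?thesis
  proof (cases "y = 0")
    case True then show ?thesis using y by simp
  next
    case False
    then have "0 < y" "y < 1" using y by auto
    then obtain p where p: "0 \<le> p" "p < y" "\<forall>t\<in>{p<..y}. f t - t = f y - y"
      using left_piece[OF f] by blast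
    define t where "t = (p+y)/2"
    have "t \<in> {p<..y}" using p unfolding t_def by auto
    then have "f t - t = f y - y" using p by blast
    then have "f t = t - y" using y by simp
    moreover have "f t \<in> {0..<1}" using iet_range[OF f, of t] p \<open>y<1\<close> unfolding t_def by auto
    ultimately show ?thesis using p unfolding t_def by auto
  qed
qed

lemma iet_open: assumes f: "is_iet f" and u: "0 < u" "u < 1" shows "0 < f u \<and> f u < 1"
proof -
  have "f u \<in> {0..<1}" using iet_range[OF f] u by auto
  moreover have "f u \<noteq> f 0" using inj_onD[OF iet_injon[OF f], of u 0] u by auto
  ultimately show ?thesis using iet_zero[OF f] by auto
qed

lemma iet_tail:
  assumes f: "is_iet f"
  shows "\<exists>a. 0 \<le> a \<and> a < 1 \<and> (\<forall>y\<in>{a<..<1}. f y = y)"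
proof -
  obtain D where D: "finite D" "\<forall>x\<in>{0..<1} - D. \<exists>e>0. \<forall>y\<in>{0..<1}. \<bar>y - x\<bar> < e \<longrightarrow> f y - y = f x - x"
    using iet_D[OF f] by blast
  define S where "S = insert (1/2) {d\<in>D. d < 1}"
  define a where "a = Max S"
  have fS: "finite S" using D(1) unfolding S_def by auto
  have a0: "1/2 \<le> a" unfolding a_def using fS by (intro Max_ge) (auto simp: S_def)
  have a1: "a < 1" unfolding a_def using fS by (subst Max_less_iff) (auto simp: S_def)
  have nd: "\<forall>d\<in>D. d \<notin> {a<..<1}"
  proof (intro ballI notI)
    fix d assume "d \<in> D" "d \<in> {a<..<1}"
    then have "d \<in> S" by (auto simp: S_def)
    then have "d \<le> a" unfolding a_def using fS by simp
    then show False using \<open>d \<in> {a<..<1}\<close> by auto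
  qed
  define g where "g t = f t - t" for t
  define c where "c = g ((a+1)/2)"
  have cst: "g x = c" if "x \<in> {a<..<1}" for x
    unfolding c_def
  proof (rule loc_const[of a 1 g])
    show "\<forall>x\<in>{a<..<1}. \<exists>e>0. \<forall>y\<in>{a<..<1}. \<bar>y - x\<bar> < e \<longrightarrow> g y = g x"
    proof
      fix x assume x: "x \<in> {a<..<1}"
      then have "x \<in> {0..<1} - D" using a0 nd by auto
      then obtain e where "e>0" "\<forall>y\<in>{0..<1}. \<bar>y - x\<bar> < e \<longrightarrow> f y - y = f x - x" using D by blast
      then show "\<exists>e>0. \<forall>y\<in>{a<..<1}. \<bar>y - x\<bar> < e \<longrightarrow> g y = g x"
        using a0 unfolding g_def by (intro exI[of _ e]) auto
    qed
  qed (use that a1 in auto)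
  have c0: "c = 0"
  proof (rule ccontr)
    assume "c \<noteq> 0"
    then consider "c > 0" | "c < 0" by linarith
    then show False
    proof cases
      case 1
      define y where "y = max ((a+1)/2) (1 - c/2)"
      have y: "y \<in> {a<..<1}" using a1 1 unfolding y_def by (auto simp: max_def)
      have "f y = y + c" using cst[OF y] g_def by simp
      moreover have "f y < 1" using iet_range[OF f, of y] y a0 by auto
      ultimately show False using 1 unfolding y_def by auto
    next
      case 2
      define E where "E = insert 0 (insert a {d\<in>D. 0 \<le> d \<and> d \<le> a})"
      have fE: "finite E" using D(1) unfolding E_def by auto
      define M where "M = Max (f ` E)"
      have E01: "E \<subseteq> {0..a}" using a0 unfolding E_def by auto
      have M1: "M < 1" unfolding M_def using fE
        apply (subst Max_less_iff) using E01 a1 iet_range[OF f] by (auto simp: E_def)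
      have bound: "f y \<le> M" if y: "y \<in> {0..a}" for y
      proof (cases "y = 0")
        case True then show ?thesis unfolding M_def using fE by (simp add: E_def)
      next
        case False
        define Q where "Q = {e\<in>E. y \<le> e}"
        define P where "P = {e\<in>E. e < y}"
        define q where "q = Min Q"
        define p where "p = Max P"
        have fQ: "finite Q" "finite P" using fE unfolding Q_def P_def by auto
        have aQ: "a \<in> Q" using y unfolding Q_def E_def by auto
        have zP: "0 \<in> P" using y False unfolding P_def E_def by auto
        have qQ: "q \<in> Q" unfolding q_def using fQ aQ Min_in by blast
        have pP: "p \<in> P" unfolding p_def using fQ zP Max_in by blast
        have yq: "y \<le> q" "q \<le> a" using qQ Q_def q_def fQ aQ by auto
        have py: "p < y" "0 \<le> p" using pP zP P_def p_def fQ by auto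
        have nd2: "\<forall>d\<in>D. d \<notin> {p<..<q}"
        proof (intro ballI notI)
          fix d assume d: "d \<in> D" "d \<in> {p<..<q}"
          then have dE: "d \<in> E" using py yq unfolding E_def by auto
          show False
          proof (cases "d < y")
            case True then have "d \<in> P" using dE P_def by auto
            then have "d \<le> p" unfolding p_def using fQ by simp
            then show False using d by auto
          next
            case False then have "d \<in> Q" using dE Q_def by auto
            then have "q \<le> d" unfolding q_def using fQ by simp
            then show False using d by auto
          qed
        qed
        have "f y - y = f q - q" using gap[OF f D(2) py(2) _ _ nd2, of y] py yq a1 False by auto
        moreover have "f q \<le> M" unfolding M_def using fQ fE qQ Q_def by auto
        ultimately show ?thesis using yq by auto
      qed
      define z0 where "z0 = max (max M (1 + c)) a"
      define z where "z = (z0 + 1)/2"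
      have z: "z \<in> {0..<1}" using M1 a1 a0 2 unfolding z_def z0_def by auto
      obtain y where yy: "y \<in> {0..<1}" "f y = z" using iet_surj[OF f z] by blast
      show False
      proof (cases "y \<le> a")
        case True then have "f y \<le> M" using bound yy by auto
        then show False using yy M1 a1 unfolding z_def z0_def by auto
      next
        case False then have "f y = y + c" using cst[of y] g_def yy by auto
        then show False using yy 2 M1 a1 unfolding z_def z0_def by auto
      qed
    qed
  qed
  show ?thesis using a0 a1 cst c0 g_def by (intro exI[of _ a]) auto
qed



definition psi :: "(real \<Rightarrow> real) \<Rightarrow> real \<Rightarrow> real" where
  "psi h u = (if u = 1 then 1 else h u)"
definition blk :: "nat \<Rightarrow> real \<Rightarrow> nat" where
  "blk m x = nat (\<lceil>x * (2 * real m)\<rceil> - 1)"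
definition loc :: "nat \<Rightarrow> real \<Rightarrow> real" where
  "loc m x = x * (2 * real m) - real (blk m x)"
definition blkop :: "nat \<Rightarrow> (nat \<Rightarrow> nat) \<Rightarrow> (nat \<Rightarrow> real \<Rightarrow> real) \<Rightarrow> real \<Rightarrow> real" where
  "blkop m \<pi> f x = (if 0 < x \<and> x \<le> 1/2
      then (real (\<pi> (blk m x)) + psi (f (blk m x)) (loc m x)) / (2 * real m) else x)"

lemma decode:
  assumes m: "0 < m" and i: "i < m" and v: "0 < v" "v \<le> 1"
  shows "0 < (real i + v) / (2 * real m) \<and> (real i + v) / (2 * real m) \<le> 1/2
    \<and> blk m ((real i + v) / (2 * real m)) = i \<and> loc m ((real i + v) / (2 * real m)) = v"
proof -
  have e: "(real i + v) / (2 * real m) * (2 * real m) = real i + v" using m by simp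
  have c: "\<lceil>real i + v\<rceil> = int i + 1"
    by (rule ceiling_unique) (use v in auto)
  have b: "blk m ((real i + v) / (2 * real m)) = i"
    unfolding blk_def e c by simp
  have le: "real i + v \<le> real m" using i v by linarith
  have p1: "0 < (real i + v) / (2 * real m)" using m v by simp
  have p2: "(real i + v) / (2 * real m) \<le> 1/2" using m le by (simp add: divide_le_eq)
  have p3: "loc m ((real i + v) / (2 * real m)) = v" unfolding loc_def b e by simp
  show ?thesis using p1 p2 p3 b by blast
qed

lemma encode:
  assumes m: "0 < m" and x: "0 < x" "x \<le> 1/2"
  shows "blk m x < m \<and> 0 < loc m x \<and> loc m x \<le> 1
     \<and> x = (real (blk m x) + loc m x) / (2 * real m)"
proof -
  define z where "z = x * (2 * real m)"
  have z1: "0 < z" using m x unfolding z_def by simp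
  have "x * (2 * real m) \<le> 1/2 * (2 * real m)" using x m by (intro mult_right_mono) auto
  then have z: "0 < z" "z \<le> real m" using z1 unfolding z_def by auto
  have c1: "1 \<le> \<lceil>z\<rceil>" using z by (simp add: le_ceiling_iff)
  have c2: "\<lceil>z\<rceil> \<le> int m" using z by (simp add: ceiling_le_iff)
  have rb: "real (blk m x) = real_of_int \<lceil>z\<rceil> - 1" unfolding blk_def z_def[symmetric] using c1 by simp
  have bl: "blk m x < m" unfolding blk_def z_def[symmetric] using c1 c2 by linarith
  have l: "loc m x = z - real_of_int \<lceil>z\<rceil> + 1" unfolding loc_def z_def[symmetric] rb by simp
  have "real_of_int \<lceil>z\<rceil> - 1 < z" "z \<le> real_of_int \<lceil>z\<rceil>" by linarith+
  then have lr: "0 < loc m x" "loc m x \<le> 1" using l by linarith+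
  have "real (blk m x) + loc m x = z" using rb l by simp
  then have "x = (real (blk m x) + loc m x) / (2 * real m)" using m unfolding z_def by simp
  then show ?thesis using bl lr by blast
qed

lemma psi_range: assumes f: "is_iet f" and u: "0 < u" "u \<le> 1"
  shows "0 < psi f u \<and> psi f u \<le> 1 \<and> (psi f u = 1 \<longleftrightarrow> u = 1)"
proof (cases "u = 1")
  case True then show ?thesis by (simp add: psi_def)
next
  case False
  then have "0 < f u \<and> f u < 1" using iet_open[OF f, of u] u by simp
  then show ?thesis using False by (simp add: psi_def)
qed

lemma psi_left: assumes f: "is_iet f" and u: "0 < u" "u \<le> 1"
  shows "\<exists>p. 0 \<le> p \<and> p < u \<and> (\<forall>s\<in>{p<..u}. psi f s - s = psi f u - u)"
proof (cases "u = 1")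
  case True
  obtain a where a: "0 \<le> a" "a < 1" "\<forall>y\<in>{a<..<1}. f y = y" using iet_tail[OF f] by blast
  have "\<forall>s\<in>{a<..u}. psi f s - s = psi f u - u"
  proof
    fix s assume s: "s \<in> {a<..u}"
    show "psi f s - s = psi f u - u"
    proof (cases "s = 1")
      case True then show ?thesis using \<open>u = 1\<close> by simp
    next
      case False then have "f s = s" using a(3) s \<open>u = 1\<close> by auto
      then show ?thesis using False \<open>u = 1\<close> by (simp add: psi_def)
    qed
  qed
  then show ?thesis using a True by blast
next
  case False
  then obtain p where p: "0 \<le> p" "p < u" "\<forall>t\<in>{p<..u}. f t - t = f u - u"
    using left_piece[OF f u(1)] u False by (meson le_less)
  have "\<forall>s\<in>{p<..u}. psi f s - s = psi f u - u"
  proof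
    fix s assume s: "s \<in> {p<..u}"
    then have "s \<noteq> 1" using False u by auto
    moreover have "f s - s = f u - u" using p(3) s by blast
    ultimately show "psi f s - s = psi f u - u" using False unfolding psi_def by simp
  qed
  then show ?thesis using p by blast
qed

lemma psi_loc: assumes D: "\<forall>x\<in>{0..<1} - D. \<exists>e>0. \<forall>y\<in>{0..<1}. \<bar>y - x\<bar> < e \<longrightarrow> f y - y = f x - x"
  and u: "0 < u" "u < 1" "u \<notin> D"
  shows "\<exists>e>0. \<forall>s. 0 < s \<and> s < 1 \<and> \<bar>s - u\<bar> < e \<longrightarrow> psi f s - s = psi f u - u"
proof -
  have "u \<in> {0..<1} - D" using u by simp
  then obtain e where "e > 0" "\<forall>y\<in>{0..<1}. \<bar>y - u\<bar> < e \<longrightarrow> f y - y = f u - u" using D by blast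
  moreover have "\<forall>s. 0 < s \<and> s < 1 \<and> \<bar>s - u\<bar> < e \<longrightarrow> psi f s - s = psi f u - u"
  proof (intro allI impI)
    fix s assume s: "0 < s \<and> s < 1 \<and> \<bar>s - u\<bar> < e"
    then have "f s - s = f u - u" using calculation(2) by simp
    then show "psi f s - s = psi f u - u" using s u unfolding psi_def by simp
  qed
  ultimately show ?thesis by blast
qed

lemma psi_id: "0 < u \<Longrightarrow> u \<le> 1 \<Longrightarrow> psi id u = u" by (simp add: psi_def)



lemma blkop_out: "\<not> (0 < x \<and> x \<le> 1/2) \<Longrightarrow> blkop m \<pi> f x = x"
  unfolding blkop_def by (simp only: if_False)

lemma blkop_enc:
  assumes m: "0 < m" and x: "0 < x" "x \<le> 1/2"
  shows "blkop m \<pi> f x = (real (\<pi> (blk m x)) + psi (f (blk m x)) (loc m x)) / (2 * real m)"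
  using x by (simp add: blkop_def)

lemma blkop_in:
  assumes m: "0 < m" and i: "i < m" and v: "0 < v" "v \<le> 1"
  shows "blkop m \<pi> f ((real i + v) / (2 * real m)) = (real (\<pi> i) + psi (f i) v) / (2 * real m)"
proof -
  note d = decode[OF m i v]
  show ?thesis unfolding blkop_def using d by simp
qed

lemma blkop_data:
  assumes m: "0 < m" and pi: "\<forall>i<m. \<pi> i < m" and f: "\<forall>i<m. is_iet (f i)"
    and x: "0 < x" "x \<le> 1/2"
  shows "0 < blkop m \<pi> f x \<and> blkop m \<pi> f x \<le> 1/2
    \<and> blk m (blkop m \<pi> f x) = \<pi> (blk m x)
    \<and> loc m (blkop m \<pi> f x) = psi (f (blk m x)) (loc m x)"
proof -
  note e = encode[OF m x]
  have pr: "0 < psi (f (blk m x)) (loc m x) \<and> psi (f (blk m x)) (loc m x) \<le> 1"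
    using psi_range[of "f (blk m x)" "loc m x"] e f by blast
  have pim: "\<pi> (blk m x) < m" using pi e by blast
  have "0 < (real (\<pi> (blk m x)) + psi (f (blk m x)) (loc m x)) / (2 * real m)
   \<and> (real (\<pi> (blk m x)) + psi (f (blk m x)) (loc m x)) / (2 * real m) \<le> 1/2
   \<and> blk m ((real (\<pi> (blk m x)) + psi (f (blk m x)) (loc m x)) / (2 * real m)) = \<pi> (blk m x)
   \<and> loc m ((real (\<pi> (blk m x)) + psi (f (blk m x)) (loc m x)) / (2 * real m)) = psi (f (blk m x)) (loc m x)"
    using decode[OF m pim] pr by blast
  then show ?thesis using blkop_enc[OF m x, of \<pi> f] by simp
qed

lemma blkop_range:
  assumes m: "0 < m" and pi: "\<forall>i<m. \<pi> i < m" and f: "\<forall>i<m. is_iet (f i)"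
    and x: "x \<in> {0..<1}"
  shows "blkop m \<pi> f x \<in> {0..<1}"
proof (cases "0 < x \<and> x \<le> 1/2")
  case True then show ?thesis using blkop_data[OF m pi f, of x] by auto
next
  case False then show ?thesis using x by (simp add: blkop_out)
qed

lemma blkop_comp:
  assumes m: "0 < m" and pi: "\<forall>i<m. \<pi>' i < m" and f: "\<forall>i<m. is_iet (f' i)"
  shows "blkop m \<pi> f (blkop m \<pi>' f' x) = blkop m (\<lambda>i. \<pi> (\<pi>' i)) (\<lambda>i. f (\<pi>' i) \<circ> f' i) x"
proof (cases "0 < x \<and> x \<le> 1/2")
  case False then show ?thesis by (simp add: blkop_out)
next
  case True
  note d = blkop_data[OF m pi f, of x]
  note e = encode[OF m, of x]
  define i where "i = blk m x"
  define u where "u = loc m x"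
  have u: "0 < u" "u \<le> 1" using e True unfolding u_def by auto
  have fi: "is_iet (f' i)" using f e True unfolding i_def by auto
  have ps: "psi (f (\<pi>' i)) (psi (f' i) u) = psi (f (\<pi>' i) \<circ> f' i) u"
  proof (cases "u = 1")
    case True then show ?thesis by (simp add: psi_def)
  next
    case False
    then have "psi (f' i) u \<noteq> 1" using psi_range[OF fi u] by blast
    then show ?thesis using False by (simp add: psi_def)
  qed
  have "blkop m \<pi> f (blkop m \<pi>' f' x) = (real (\<pi> (\<pi>' i)) + psi (f (\<pi>' i)) (psi (f' i) u)) / (2 * real m)"
    using blkop_enc[OF m, of "blkop m \<pi>' f' x" \<pi> f] d True unfolding i_def u_def by simp
  also have "\<dots> = blkop m (\<lambda>i. \<pi> (\<pi>' i)) (\<lambda>i. f (\<pi>' i) \<circ> f' i) x"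
    using blkop_enc[OF m, of x "(\<lambda>i. \<pi> (\<pi>' i))" "(\<lambda>i. f (\<pi>' i) \<circ> f' i)"] True ps
    unfolding i_def u_def by simp
  finally show ?thesis .
qed

lemma blkop_cong:
  assumes m: "0 < m" and "\<forall>i<m. \<pi> i = \<pi>' i" "\<forall>i<m. f i = f' i"
  shows "blkop m \<pi> f = blkop m \<pi>' f'"
proof
  fix x show "blkop m \<pi> f x = blkop m \<pi>' f' x"
  proof (cases "0 < x \<and> x \<le> 1/2")
    case True
    then have "blk m x < m" using encode[OF m] by blast
    then show ?thesis using assms True by (simp add: blkop_def)
  qed (simp add: blkop_out)
qed

lemma blkop_id:
  assumes m: "0 < m"
  shows "blkop m (\<lambda>i. i) (\<lambda>i. id) = id"
proof
  fix x show "blkop m (\<lambda>i. i) (\<lambda>i. id) x = id x"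
  proof (cases "0 < x \<and> x \<le> 1/2")
    case True
    note e = encode[OF m, of x]
    have "psi id (loc m x) = loc m x" using e True by (simp add: psi_def)
    then show ?thesis using blkop_enc[OF m, of x "\<lambda>i. i" "\<lambda>i. id"] e True by simp
  qed (simp add: blkop_out)
qed



lemma lt_tendsto:
  fixes B :: "real \<Rightarrow> real"
  assumes "p < x" "\<forall>t\<in>{p<..x}. B t - t = B x - x"
  shows "(B \<longlongrightarrow> B x) (at_left x)"
proof -
  have ev: "eventually (\<lambda>t. t + (B x - x) = B t) (at_left x)"
    using eventually_at_left_real[OF assms(1)]
  proof eventually_elim
    case (elim t)
    then have "t \<in> {p<..x}" by auto
    then have "B t - t = B x - x" using assms(2) by blast
    then show ?case by simp
  qed
  have "((\<lambda>t. t + (B x - x)) \<longlongrightarrow> x + (B x - x)) (at_left x)"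
    by (intro tendsto_intros)
  then have "((\<lambda>t. t + (B x - x)) \<longlongrightarrow> B x) (at_left x)" by simp
  then show ?thesis using Lim_transform_eventually[OF _ ev] by blast
qed

lemma blkop_shift:
  assumes m: "0 < m" and i: "i < m" and s: "0 < s" "s \<le> 1"
  shows "blkop m \<pi> f ((real i + s) / (2 * real m)) - (real i + s) / (2 * real m)
     = (real (\<pi> i) - real i + (psi (f i) s - s)) / (2 * real m)"
proof -
  have "blkop m \<pi> f ((real i + s) / (2 * real m)) - (real i + s) / (2 * real m)
      = (real (\<pi> i) + psi (f i) s - (real i + s)) / (2 * real m)"
    using blkop_in[OF m i s] by (simp add: diff_divide_distrib)
  also have "\<dots> = (real (\<pi> i) - real i + (psi (f i) s - s)) / (2 * real m)"
    by (simp add: algebra_simps)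
  finally show ?thesis .
qed

lemma blkop_iet:
  assumes m: "0 < m" and pi: "\<forall>i<m. \<pi> i < m" and f: "\<forall>i<m. is_iet (f i)"
    and bij: "bij_betw (blkop m \<pi> f) {0..<1} {0..<1}"
  shows "is_iet (blkop m \<pi> f)"
proof -
  define B where "B = blkop m \<pi> f"
  have out: "\<forall>x. x \<notin> {0..<1} \<longrightarrow> B x = x" unfolding B_def by (auto intro: blkop_out)
  have lt: "\<exists>p<x. \<forall>t\<in>{p<..x}. B t - t = B x - x" if x: "x \<in> {0<..<1}" for x
  proof (cases "x \<le> 1/2")
    case False
    have "\<forall>t\<in>{1/2<..x}. B t - t = B x - x" unfolding B_def using False
      by (auto simp: blkop_out)
    moreover have "1/2 < x" using False by simp
    ultimately show ?thesis by blast
  next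
    case True
    note e = encode[OF m, of x]
    define i where "i = blk m x"
    define u where "u = loc m x"
    have iu: "i < m" "0 < u" "u \<le> 1" "x = (real i + u) / (2 * real m)"
      using e True x unfolding i_def u_def by auto
    have fi: "is_iet (f i)" using f iu by auto
    obtain p0 where p0: "0 \<le> p0" "p0 < u" "\<forall>s\<in>{p0<..u}. psi (f i) s - s = psi (f i) u - u"
      using psi_left[OF fi iu(2,3)] by blast
    define p where "p = (real i + p0) / (2 * real m)"
    have px: "p < x" unfolding p_def iu(4) using p0 m by (simp add: divide_strict_right_mono)
    have "\<forall>t\<in>{p<..x}. B t - t = B x - x"
    proof
      fix t assume t: "t \<in> {p<..x}"
      define s where "s = t * (2 * real m) - real i"
      have ts: "t = (real i + s) / (2 * real m)" unfolding s_def using m by simp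
      have "p * (2 * real m) < t * (2 * real m)" using t m by simp
      then have s1: "p0 < s" unfolding s_def p_def using m by simp
      have "t * (2 * real m) \<le> x * (2 * real m)" using t m by simp
      then have s2: "s \<le> u" unfolding s_def iu(4) using m by simp
      have s0: "0 < s" "s \<le> 1" using s1 s2 p0 iu by auto
      have h1: "B t - t = (real (\<pi> i) - real i + (psi (f i) s - s)) / (2 * real m)"
        unfolding B_def ts by (rule blkop_shift[OF m iu(1) s0])
      have "s \<in> {p0<..u}" using s1 s2 by simp
      then have h2: "psi (f i) s - s = psi (f i) u - u" using p0(3) by blast
      have h3: "B x - x = (real (\<pi> i) - real i + (psi (f i) u - u)) / (2 * real m)"
        unfolding B_def iu(4) by (rule blkop_shift[OF m iu(1) iu(2,3)])
      show "B t - t = B x - x" unfolding h1 h3 h2 ..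
    qed
    then show ?thesis using px by blast
  qed
  have lc: "\<forall>x\<in>{0<..<1}. (B \<longlongrightarrow> B x) (at_left x)"
    using lt lt_tendsto by blast
  have "\<forall>i<m. \<exists>D. finite D \<and> (\<forall>x\<in>{0..<1} - D. \<exists>e>0. \<forall>y\<in>{0..<1}. \<bar>y - x\<bar> < e \<longrightarrow> f i y - y = f i x - x)"
    using f iet_D by blast
  then obtain Ds where Ds: "\<forall>i<m. finite (Ds i) \<and> (\<forall>x\<in>{0..<1} - Ds i. \<exists>e>0. \<forall>y\<in>{0..<1}. \<bar>y - x\<bar> < e \<longrightarrow> f i y - y = f i x - x)"
    by metis
  define DB where "DB = (\<lambda>k. real k / (2 * real m)) ` {..m} \<union> (\<Union>i<m. (\<lambda>d. (real i + d) / (2 * real m)) ` Ds i)"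
  have fDB: "finite DB" unfolding DB_def using Ds by auto
  have dc: "\<exists>e>0. \<forall>y\<in>{0..<1}. \<bar>y - x\<bar> < e \<longrightarrow> B y - y = B x - x" if x: "x \<in> {0..<1} - DB" for x
  proof -
    have x0: "x \<noteq> 0" using x unfolding DB_def by force
    have xh: "x \<noteq> 1/2" using x m unfolding DB_def by force
    show ?thesis
    proof (cases "x < 1/2")
      case False
      then have xh2: "1/2 < x" using xh by simp
      have "\<forall>y\<in>{0..<1}. \<bar>y - x\<bar> < x - 1/2 \<longrightarrow> B y - y = B x - x"
      proof (intro ballI impI)
        fix y assume y: "y \<in> {0..<1}" "\<bar>y - x\<bar> < x - 1/2"
        then have "1/2 < y" by (simp add: abs_less_iff)
        then show "B y - y = B x - x" unfolding B_def using xh2 by (simp add: blkop_out)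
      qed
      moreover have "x - 1/2 > 0" using xh2 by simp
      ultimately show ?thesis by blast
    next
      case True
      have x1: "0 < x" "x \<le> 1/2" using x x0 True by auto
      note e = encode[OF m x1]
      define i where "i = blk m x"
      define u where "u = loc m x"
      have iu: "i < m" "0 < u" "u \<le> 1" "x = (real i + u) / (2 * real m)"
        using e unfolding i_def u_def by auto
      have u1: "u \<noteq> 1"
      proof
        assume "u = 1"
        then have "x = real (Suc i) / (2 * real m)" using iu by simp
        moreover have "Suc i \<in> {..m}" using iu by simp
        ultimately show False using x unfolding DB_def by blast
      qed
      have uD: "u \<notin> Ds i"
      proof
        assume "u \<in> Ds i"
        then have "x \<in> (\<Union>i<m. (\<lambda>d. (real i + d) / (2 * real m)) ` Ds i)" using iu by blast
        then show False using x unfolding DB_def by blast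
      qed
      obtain e0 where e0: "e0 > 0" "\<forall>s. 0 < s \<and> s < 1 \<and> \<bar>s - u\<bar> < e0 \<longrightarrow> psi (f i) s - s = psi (f i) u - u"
        using psi_loc[of "Ds i" "f i" u] Ds iu u1 uD by auto
      define e where "e = min e0 (min u (1 - u)) / (2 * real m)"
      have epos: "e > 0" unfolding e_def using e0 iu u1 m by auto
      have "\<forall>y\<in>{0..<1}. \<bar>y - x\<bar> < e \<longrightarrow> B y - y = B x - x"
      proof (intro ballI impI)
        fix y assume y: "y \<in> {0..<1}" "\<bar>y - x\<bar> < e"
        define s where "s = y * (2 * real m) - real i"
        have ys: "y = (real i + s) / (2 * real m)" unfolding s_def using m by simp
        have xm: "x * (2 * real m) = real i + u" using iu(4) m by simp
        have "s - u = y * (2 * real m) - x * (2 * real m)" using xm unfolding s_def by linarith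
        also have "\<dots> = (y - x) * (2 * real m)" by (simp add: left_diff_distrib)
        finally have "s - u = (y - x) * (2 * real m)" .
        then have "\<bar>s - u\<bar> = \<bar>y - x\<bar> * (2 * real m)" by (simp add: abs_mult)
        also have "\<dots> < e * (2 * real m)" using y m by simp
        also have "\<dots> = min e0 (min u (1 - u))" unfolding e_def using m by simp
        finally have su: "\<bar>s - u\<bar> < min e0 (min u (1 - u))" .
        then have s01: "0 < s" "s < 1" "\<bar>s - u\<bar> < e0" by auto
        have s0: "0 < s" "s \<le> 1" using s01 by auto
        have h1: "B y - y = (real (\<pi> i) - real i + (psi (f i) s - s)) / (2 * real m)"
          unfolding B_def ys by (rule blkop_shift[OF m iu(1) s0])
        have h2: "psi (f i) s - s = psi (f i) u - u" using e0(2) s01 by blast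
        have h3: "B x - x = (real (\<pi> i) - real i + (psi (f i) u - u)) / (2 * real m)"
          unfolding B_def iu(4) by (rule blkop_shift[OF m iu(1) iu(2,3)])
        show "B y - y = B x - x" unfolding h1 h3 h2 ..
      qed
      then show ?thesis using epos by blast
    qed
  qed
  show ?thesis unfolding is_iet_def B_def[symmetric]
    using bij out lc fDB dc unfolding B_def by blast
qed



lemma iet_one_id:
  assumes f: "is_iet f" and idem: "f \<circ> f = f"
  shows "f = id"
proof
  fix x show "f x = id x"
  proof (cases "x \<in> {0..<1}")
    case True
    have "f (f x) = f x" using idem by (metis comp_apply)
    moreover have "f x \<in> {0..<1}" using iet_range[OF f True] .
    ultimately show ?thesis using inj_onD[OF iet_injon[OF f]] True by auto
  next
    case False then show ?thesis using iet_out[OF f] by simp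
  qed
qed

lemma iet_eq:
  assumes f: "is_iet f" and g: "is_iet g" and eq: "\<forall>v. 0 < v \<and> v < 1 \<longrightarrow> f v = g v"
  shows "f = g"
proof
  fix x show "f x = g x"
  proof (cases "x \<in> {0..<1}")
    case True
    then show ?thesis using eq iet_zero[OF f] iet_zero[OF g]
      by (cases "x = 0") auto
  next
    case False then show ?thesis using iet_out[OF f] iet_out[OF g] by simp
  qed
qed

lemma (in group) main_aux:
  assumes "subgroup H G"
    and "finite (rcosets H)"
    and "embeds_in_IET (G\<lparr>carrier := H\<rparr>)"
  shows "embeds_in_IET G"
proof -
  interpret subgroup H G by fact
  have oneG: "\<one> \<in> carrier G" by simp
  have oneH: "\<one> \<in> H" by simp
  obtain \<phi> where phi: "\<phi> \<in> hom (G\<lparr>carrier := H\<rparr>) IET" "inj_on \<phi> H"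
    using assms(3) unfolding embeds_in_IET_def by auto
  have phi_iet: "is_iet (\<phi> h)" if "h \<in> H" for h
    using phi(1) that unfolding hom_def IET_def by auto
  have phi_mult: "\<phi> (a \<otimes> b) = \<phi> a \<circ> \<phi> b" if "a \<in> H" "b \<in> H" for a b
    using phi(1) that unfolding hom_def IET_def by auto
  have phi_one: "\<phi> \<one> = id"
    using iet_one_id[OF phi_iet[OF oneH]] phi_mult[OF oneH oneH] by simp
  define R where "R = rcosets H"
  define m where "m = card R"
  have HR: "H \<in> R" unfolding R_def
    using rcosetsI[OF subset oneG] coset_join2[OF oneG assms(1) oneH] by simp
  have m: "0 < m" unfolding m_def using HR assms(2) R_def card_gt_0_iff by blast
  obtain e where e: "bij_betw e {0..<m} R" using ex_bij_betw_nat_finite[OF assms(2)[folded R_def]]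
    unfolding m_def by blast
  have ex: "\<exists>x. x \<in> carrier G \<and> e i = H #> x" if i: "i < m" for i
  proof -
    have "e i \<in> R" using e i unfolding bij_betw_def by auto
    then obtain x where "x \<in> carrier G" "e i = H #> x" unfolding R_def RCOSETS_def by blast
    then show ?thesis by blast
  qed
  define r where "r i = (SOME x. x \<in> carrier G \<and> e i = H #> x)" for i
  have r: "\<forall>i<m. r i \<in> carrier G \<and> e i = H #> r i"
  proof (intro allI impI)
    fix i assume "i < m"
    then show "r i \<in> carrier G \<and> e i = H #> r i" unfolding r_def using someI_ex[OF ex] by blast
  qed
  have einj: "inj_on e {0..<m}" using e bij_betw_def by blast
  define \<tau> where "\<tau> g i = the_inv_into {0..<m} e (H #> (r i \<otimes> inv g))" for g i
  have T1: "\<tau> g i < m \<and> e (\<tau> g i) = H #> (r i \<otimes> inv g)" if "g \<in> carrier G" "i < m" for g i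
  proof -
    have ri: "r i \<in> carrier G" using r that(2) by blast
    have "r i \<otimes> inv g \<in> carrier G" using ri that(1) by simp
    then have "H #> (r i \<otimes> inv g) \<in> R" unfolding R_def by (rule rcosetsI[OF subset])
    then have "H #> (r i \<otimes> inv g) \<in> e ` {0..<m}" using e unfolding bij_betw_def by simp
    then have y: "H #> (r i \<otimes> inv g) \<in> e ` {0..<m}" .
    have a: "the_inv_into {0..<m} e (H #> (r i \<otimes> inv g)) \<in> {0..<m}"
      by (rule the_inv_into_into[OF einj y subset_refl])
    have b: "e (the_inv_into {0..<m} e (H #> (r i \<otimes> inv g))) = H #> (r i \<otimes> inv g)"
      by (rule f_the_inv_into_f[OF einj y])
    show ?thesis unfolding \<tau>_def using a b by simp
  qed
  have eeq: "i = j" if "i < m" "j < m" "e i = e j" for i j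
    using inj_onD[OF einj that(3)] that(1,2) by simp
  have rC: "r i \<in> carrier G" if "i < m" for i using r that by blast
  have rE: "e i = H #> r i" if "i < m" for i using r that by blast
  have T1a: "\<tau> g i < m" if "g \<in> carrier G" "i < m" for g i using T1[OF that] by blast
  have T1b: "e (\<tau> g i) = H #> (r i \<otimes> inv g)" if "g \<in> carrier G" "i < m" for g i using T1[OF that] by blast
  have T2: "\<tau> (g \<otimes> g') i = \<tau> g (\<tau> g' i)" if g: "g \<in> carrier G" "g' \<in> carrier G" and i: "i < m" for g g' i
  proof -
    define j where "j = \<tau> g' i"
    have j: "j < m" unfolding j_def by (rule T1a[OF g(2) i])
    have rj: "H #> r j = H #> (r i \<otimes> inv g')" using T1b[OF g(2) i] rE[OF j] unfolding j_def by simp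
    have ri: "r i \<in> carrier G" by (rule rC[OF i])
    have ig: "inv g \<in> carrier G" "inv g' \<in> carrier G" using g by simp_all
    have gg: "g \<otimes> g' \<in> carrier G" using g by simp
    have "e (\<tau> g j) = H #> (r j \<otimes> inv g)" by (rule T1b[OF g(1) j])
    also have "\<dots> = (H #> r j) #> inv g" using coset_mult_assoc[OF subset rC[OF j] ig(1)] by simp
    also have "\<dots> = (H #> (r i \<otimes> inv g')) #> inv g" using rj by simp
    also have "\<dots> = H #> (r i \<otimes> inv g' \<otimes> inv g)"
      using coset_mult_assoc[OF subset _ ig(1), of "r i \<otimes> inv g'"] ri ig by simp
    also have "r i \<otimes> inv g' \<otimes> inv g = r i \<otimes> inv (g \<otimes> g')"
      using ri ig g by (simp add: inv_mult_group m_assoc)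
    also have "H #> (r i \<otimes> inv (g \<otimes> g')) = e (\<tau> (g \<otimes> g') i)" using T1b[OF gg i] by simp
    finally have "e (\<tau> g j) = e (\<tau> (g \<otimes> g') i)" .
    then show ?thesis unfolding j_def[symmetric]
      using eeq[OF T1a[OF gg i] T1a[OF g(1) j]] by simp
  qed
  have T3: "\<tau> \<one> i = i" if i: "i < m" for i
  proof -
    have "e (\<tau> \<one> i) = e i" using T1b[OF oneG i] rE[OF i] rC[OF i] by simp
    then show ?thesis using eeq[OF T1a[OF oneG i] i] by simp
  qed
  define d where "d g i = r (\<tau> g i) \<otimes> g \<otimes> inv (r i)" for g i
  have D1: "d g i \<in> H" if g: "g \<in> carrier G" and i: "i < m" for g i
  proof -
    have t: "\<tau> g i < m" by (rule T1a[OF g i])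
    have rc: "r (\<tau> g i) \<in> carrier G" "r i \<in> carrier G" using rC t i by auto
    have ig: "r i \<otimes> inv g \<in> carrier G" using rc g by simp
    have "r (\<tau> g i) \<in> H #> r (\<tau> g i)" using rcos_self[OF rc(1) assms(1)] .
    then have "r (\<tau> g i) \<in> H #> (r i \<otimes> inv g)" using rE[OF t] T1b[OF g i] by simp
    then have "r (\<tau> g i) \<otimes> inv (r i \<otimes> inv g) \<in> H"
      by (rule rcos_module_imp[OF is_group ig])
    then show ?thesis unfolding d_def using rc g by (simp add: inv_mult_group m_assoc)
  qed
  have D2: "d (g \<otimes> g') i = d g (\<tau> g' i) \<otimes> d g' i" if g: "g \<in> carrier G" "g' \<in> carrier G" and i: "i < m" for g g' i
  proof -
    define j where "j = \<tau> g' i"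
    have j: "j < m" unfolding j_def by (rule T1a[OF g(2) i])
    have rc: "r (\<tau> g j) \<in> carrier G" "r j \<in> carrier G" "r i \<in> carrier G"
      using rC[OF T1a[OF g(1) j]] rC[OF j] rC[OF i] by auto
    have "d g j \<otimes> d g' i = r (\<tau> g j) \<otimes> (g \<otimes> (inv (r j) \<otimes> (r j \<otimes> (g' \<otimes> inv (r i)))))"
      unfolding d_def j_def[symmetric] using rc g by (simp add: m_assoc)
    also have "inv (r j) \<otimes> (r j \<otimes> (g' \<otimes> inv (r i))) = g' \<otimes> inv (r i)"
      using rc g by (simp add: m_assoc[symmetric])
    also have "r (\<tau> g j) \<otimes> (g \<otimes> (g' \<otimes> inv (r i))) = r (\<tau> g j) \<otimes> (g \<otimes> g') \<otimes> inv (r i)"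
      using rc g by (simp add: m_assoc)
    finally have "d g j \<otimes> d g' i = r (\<tau> g j) \<otimes> (g \<otimes> g') \<otimes> inv (r i)" .
    then show ?thesis unfolding d_def T2[OF g i] j_def by simp
  qed
  have D3: "d \<one> i = \<one>" if i: "i < m" for i
    unfolding d_def T3[OF i] using rC[OF i] by simp
  define F where "F g = blkop m (\<tau> g) (\<lambda>i. \<phi> (d g i))" for g
  have Fpi: "\<forall>i<m. \<tau> g i < m" if "g \<in> carrier G" for g using T1a that by blast
  have Ff: "\<forall>i<m. is_iet (\<phi> (d g i))" if "g \<in> carrier G" for g using D1 phi_iet that by blast
  have Fcomp: "F g \<circ> F g' = F (g \<otimes> g')" if g: "g \<in> carrier G" "g' \<in> carrier G" for g g'
  proof
    fix x
    have "(F g \<circ> F g') x = F g (F g' x)" by simp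
    also have "\<dots> = blkop m (\<lambda>i. \<tau> g (\<tau> g' i)) (\<lambda>i. \<phi> (d g (\<tau> g' i)) \<circ> \<phi> (d g' i)) x"
      unfolding F_def by (rule blkop_comp[OF m Fpi[OF g(2)] Ff[OF g(2)]])
    also have "blkop m (\<lambda>i. \<tau> g (\<tau> g' i)) (\<lambda>i. \<phi> (d g (\<tau> g' i)) \<circ> \<phi> (d g' i)) = F (g \<otimes> g')"
      unfolding F_def
    proof (rule blkop_cong[OF m])
      show "\<forall>i<m. \<tau> g (\<tau> g' i) = \<tau> (g \<otimes> g') i" using T2[OF g] by simp
      show "\<forall>i<m. \<phi> (d g (\<tau> g' i)) \<circ> \<phi> (d g' i) = \<phi> (d (g \<otimes> g') i)"
      proof (intro allI impI)
        fix i assume i: "i < m"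
        have ti: "\<tau> g' i < m" by (rule T1a[OF g(2) i])
        show "\<phi> (d g (\<tau> g' i)) \<circ> \<phi> (d g' i) = \<phi> (d (g \<otimes> g') i)"
          unfolding D2[OF g i] by (rule phi_mult[OF D1[OF g(1) ti] D1[OF g(2) i], symmetric])
      qed
    qed
    finally show "(F g \<circ> F g') x = F (g \<otimes> g') x" .
  qed
  have F1: "F \<one> = id"
  proof -
    have "F \<one> = blkop m (\<lambda>i. i) (\<lambda>i. id)" unfolding F_def
      by (rule blkop_cong[OF m]) (simp_all add: T3 D3 phi_one)
    then show ?thesis using blkop_id[OF m] by simp
  qed
  have Fapp: "F g (F g' x) = F (g \<otimes> g') x" if "g \<in> carrier G" "g' \<in> carrier G" for g g' x
    using Fcomp[OF that] by (metis comp_apply)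
  have Fbij: "bij_betw (F g) {0..<1} {0..<1}" if g: "g \<in> carrier G" for g
  proof (rule bij_betw_byWitness[where f' = "F (inv g)"])
    show "\<forall>a\<in>{0..<1}. F (inv g) (F g a) = a" using Fapp[of "inv g" g] g F1 by simp
    show "\<forall>a\<in>{0..<1}. F g (F (inv g) a) = a" using Fapp[of g "inv g"] g F1 by simp
    show "F g ` {0..<1} \<subseteq> {0..<1}" unfolding F_def using blkop_range[OF m Fpi[OF g] Ff[OF g]] by auto
    show "F (inv g) ` {0..<1} \<subseteq> {0..<1}" unfolding F_def
      using blkop_range[OF m Fpi Ff, of "inv g"] g by auto
  qed
  have Fiet: "is_iet (F g)" if g: "g \<in> carrier G" for g
    using blkop_iet[OF m Fpi[OF g] Ff[OF g]] Fbij[OF g] unfolding F_def by simp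
  have hom: "F \<in> hom G IET"
    unfolding hom_def IET_def using Fiet Fcomp by auto
  have inj: "inj_on F (carrier G)"
  proof (rule inj_onI)
    fix g g' assume g: "g \<in> carrier G" "g' \<in> carrier G" and eq: "F g = F g'"
    have key: "\<tau> g 0 = \<tau> g' 0 \<and> \<phi> (d g 0) v = \<phi> (d g' 0) v" if v: "0 < v" "v < 1" for v
    proof -
      have dec: "0 < (real 0 + v) / (2 * real m) \<and> (real 0 + v) / (2 * real m) \<le> 1/2
          \<and> blk m ((real 0 + v) / (2 * real m)) = 0 \<and> loc m ((real 0 + v) / (2 * real m)) = v"
        using decode[OF m m, of v] v by simp
      define x where "x = (real 0 + v) / (2 * real m)"
      have A: "blk m (F h x) = \<tau> h 0 \<and> loc m (F h x) = psi (\<phi> (d h 0)) v" if h: "h \<in> carrier G" for h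
        using blkop_data[OF m Fpi[OF h] Ff[OF h], of x] dec unfolding x_def F_def by simp
      have "psi (\<phi> (d g 0)) v = \<phi> (d g 0) v" "psi (\<phi> (d g' 0)) v = \<phi> (d g' 0) v"
        using v by (simp_all add: psi_def)
      then show ?thesis using A[OF g(1)] A[OF g(2)] eq by metis
    qed
    have "\<phi> (d g 0) = \<phi> (d g' 0)"
      using iet_eq[OF phi_iet[OF D1[OF g(1) m]] phi_iet[OF D1[OF g(2) m]]] key by blast
    then have "d g 0 = d g' 0" using inj_onD[OF phi(2)] D1 g m by blast
    then have "r (\<tau> g 0) \<otimes> g \<otimes> inv (r 0) = r (\<tau> g 0) \<otimes> g' \<otimes> inv (r 0)"
      unfolding d_def using key[of "1/2"] by simp
    moreover have "r (\<tau> g 0) \<in> carrier G" "r 0 \<in> carrier G" using rC[OF T1a[OF g(1) m]] rC[OF m] by auto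
    ultimately show "g = g'" using g by simp
  qed
  show ?thesis unfolding embeds_in_IET_def using hom inj by blast
qed

theorem mainTheorem8:
  fixes G :: "('a, 'b) monoid_scheme" and H :: "'a set"
  assumes "group G"
    and "subgroup H G"
    and "finite (rcosets\<^bsub>G\<^esub> H)"
    and "embeds_in_IET (G\<lparr>carrier := H\<rparr>)"
  shows "embeds_in_IET G"
  using group.main_aux[OF assms(1) assms(2-4)] .


end
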